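(* Let $f:\mathbb{R}^n\times\mathbb{R}^m\to\mathbb{R}$ be twice continuously differentiable, convex in $x$ and concave in $y$. For $\nu>0$ let $z^*(\nu)$ be the saddle point of $\min_x\max_y f_\nu(x,y)$, $f_\nu(x,y)=f(x,y)+\frac{\nu}{2}\|x\|^2-\frac{\nu}{2}\|y\|^2$, and suppose there exist $C,\delta_0>0$ and $\theta\in(0,1]$ with $\|z^*(\nu_1)-z^*(\nu_2)\|\le C|\nu_1-\nu_2|^\theta$ for all $0<\nu_1,\nu_2<\delta_0$. Then for any sequence $\{\nu_k\}$ of positive numbers with $\lim_{k\to\infty}\nu_k=0$, the sequence $\{z^*(\nu_k)\}$ has a unique limit point $z^*=\lim_{k\to\infty}z^*(\nu_k)$, and $z^*$ is a saddle point of $\min_{x}\max_{y}f(x,y)$. *)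

theory Defs
  imports "HOL-Analysis.Analysis"
begin

definition C2 :: "('a::real_normed_vector \<Rightarrow> real) \<Rightarrow> bool" where
  "C2 g \<longleftrightarrow> (\<exists>(Dg :: 'a \<Rightarrow> 'a \<Rightarrow>\<^sub>L real) (D2g :: 'a \<Rightarrow> 'a \<Rightarrow>\<^sub>L ('a \<Rightarrow>\<^sub>L real)).
      (\<forall>z. (g has_derivative blinfun_apply (Dg z)) (at z)) \<and>
      (\<forall>z. (Dg has_derivative blinfun_apply (D2g z)) (at z)) \<and>
      continuous_on UNIV D2g)"

definition saddle_point :: "('a \<Rightarrow> 'b \<Rightarrow> real) \<Rightarrow> 'a \<times> 'b \<Rightarrow> bool" where
  "saddle_point f z \<longleftrightarrow> (\<forall>x y. f (fst z) y \<le> f (fst z) (snd z) \<and> f (fst z) (snd z) \<le> f x (snd z))"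

definition reg :: "real \<Rightarrow> (real^'n \<Rightarrow> real^'m \<Rightarrow> real) \<Rightarrow> real^'n \<Rightarrow> real^'m \<Rightarrow> real" where
  "reg \<nu> f x y = f x y + \<nu> / 2 * (norm x)\<^sup>2 - \<nu> / 2 * (norm y)\<^sup>2"

end

theory Submission
  imports Defs
begin

theorem lemma5p4:
  fixes f :: "real^'n \<Rightarrow> real^'m \<Rightarrow> real"
    and zs :: "real \<Rightarrow> (real^'n) \<times> (real^'m)"
    and C \<delta>0 \<theta> :: real
  assumes C2: "C2 (\<lambda>z. f (fst z) (snd z))"
    and cvx: "\<forall>y. convex_on UNIV (\<lambda>x. f x y)"
    and ccv: "\<forall>x. concave_on UNIV (\<lambda>y. f x y)"
    and zs_saddle: "\<forall>\<nu>>0. saddle_point (reg \<nu> f) (zs \<nu>)"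
    and C_pos: "C > 0" and \<delta>0_pos: "\<delta>0 > 0" and \<theta>: "0 < \<theta>" "\<theta> \<le> 1"
    and hoelder: "\<forall>\<nu>1 \<nu>2. 0 < \<nu>1 \<and> \<nu>1 < \<delta>0 \<and> 0 < \<nu>2 \<and> \<nu>2 < \<delta>0 \<longrightarrow>
                    norm (zs \<nu>1 - zs \<nu>2) \<le> C * \<bar>\<nu>1 - \<nu>2\<bar> powr \<theta>"
  shows "\<forall>\<nu> :: nat \<Rightarrow> real. (\<forall>k. \<nu> k > 0) \<and> \<nu> \<longlonglongrightarrow> 0 \<longrightarrow>
           (\<exists>z. (\<lambda>k. zs (\<nu> k)) \<longlonglongrightarrow> z \<and> saddle_point f z)"
proof (intro allI impI, elim conjE)
  fix \<nu> :: "nat \<Rightarrow> real"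
  assume pos: "\<forall>k. \<nu> k > 0" and lim: "\<nu> \<longlonglongrightarrow> 0"
  define g where "g = (\<lambda>z. f (fst z) (snd z))"
  have contg: "isCont g w" for w
  proof -
    from C2 obtain Dg :: "(real^'n) \<times> (real^'m) \<Rightarrow> _ \<Rightarrow>\<^sub>L real" where
      "\<forall>z. (g has_derivative blinfun_apply (Dg z)) (at z)"
      unfolding C2_def g_def by blast
    then show ?thesis using has_derivative_continuous by blast
  qed
  have cau: "Cauchy (\<lambda>k. zs (\<nu> k))"
    unfolding Cauchy_def
  proof (intro allI impI)
    fix e :: real assume e: "e > 0"
    define \<eta> where "\<eta> = (e / (2*C)) powr (1/\<theta>)"
    have \<eta>pos: "\<eta> > 0" using e C_pos unfolding \<eta>_def by simp
    have \<eta>th: "\<eta> powr \<theta> = e / (2*C)"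
      unfolding \<eta>_def using e C_pos \<theta> by (simp add: powr_powr)
    have "eventually (\<lambda>k. \<nu> k < min \<delta>0 \<eta>) sequentially"
      using lim \<eta>pos \<delta>0_pos by (intro order_tendstoD(2)) auto
    then obtain M where M: "\<And>k. k \<ge> M \<Longrightarrow> \<nu> k < min \<delta>0 \<eta>"
      unfolding eventually_sequentially by blast
    show "\<exists>M. \<forall>m\<ge>M. \<forall>n\<ge>M. dist (zs (\<nu> m)) (zs (\<nu> n)) < e"
    proof (intro exI allI impI)
      fix m n assume mn: "m \<ge> M" "n \<ge> M"
      have a: "\<nu> m < \<delta>0" "\<nu> n < \<delta>0" "\<nu> m < \<eta>" "\<nu> n < \<eta>" using M mn by auto
      have "dist (zs (\<nu> m)) (zs (\<nu> n)) \<le> C * \<bar>\<nu> m - \<nu> n\<bar> powr \<theta>"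
        using hoelder pos a by (simp add: dist_norm)
      also have "\<dots> \<le> C * \<eta> powr \<theta>"
      proof -
        have "\<bar>\<nu> m - \<nu> n\<bar> \<le> \<eta>" using a pos by (smt (verit))
        then have "\<bar>\<nu> m - \<nu> n\<bar> powr \<theta> \<le> \<eta> powr \<theta>"
          using \<theta> by (intro powr_mono2) auto
        then show ?thesis using C_pos by simp
      qed
      also have "\<dots> = e / 2" using \<eta>th C_pos by simp
      also have "\<dots> < e" using e by simp
      finally show "dist (zs (\<nu> m)) (zs (\<nu> n)) < e" .
    qed
  qed
  then obtain z where zlim: "(\<lambda>k. zs (\<nu> k)) \<longlonglongrightarrow> z"
    using Cauchy_convergent convergent_def by blast
  have xl: "(\<lambda>k. fst (zs (\<nu> k))) \<longlonglongrightarrow> fst z" using zlim by (rule tendsto_fst)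
  have yl: "(\<lambda>k. snd (zs (\<nu> k))) \<longlonglongrightarrow> snd z" using zlim by (rule tendsto_snd)
  have gl: "(\<lambda>k. g (a k, b k)) \<longlonglongrightarrow> g (a0, b0)"
    if "a \<longlonglongrightarrow> a0" "b \<longlonglongrightarrow> b0" for a b a0 b0
    using isCont_tendsto_compose[OF contg tendsto_Pair[OF that]] .
  have saddle: "saddle_point f z"
    unfolding saddle_point_def
  proof (intro allI conjI)
    fix x y
    have s: "reg (\<nu> k) f (fst (zs (\<nu> k))) y \<le> reg (\<nu> k) f (fst (zs (\<nu> k))) (snd (zs (\<nu> k)))"
      "reg (\<nu> k) f (fst (zs (\<nu> k))) (snd (zs (\<nu> k))) \<le> reg (\<nu> k) f x (snd (zs (\<nu> k)))" for k
      using zs_saddle pos unfolding saddle_point_def by blast+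
    have L1: "(\<lambda>k. reg (\<nu> k) f (fst (zs (\<nu> k))) y) \<longlonglongrightarrow> f (fst z) y"
    proof -
      have "(\<lambda>k. g (fst (zs (\<nu> k)), y) + \<nu> k / 2 * (norm (fst (zs (\<nu> k))))\<^sup>2 - \<nu> k / 2 * (norm y)\<^sup>2)
          \<longlonglongrightarrow> g (fst z, y) + 0 / 2 * (norm (fst z))\<^sup>2 - 0 / 2 * (norm y)\<^sup>2"
        using zlim by (intro tendsto_intros gl xl lim) auto
      then show ?thesis by (simp add: reg_def g_def)
    qed
    have L2: "(\<lambda>k. reg (\<nu> k) f (fst (zs (\<nu> k))) (snd (zs (\<nu> k)))) \<longlonglongrightarrow> f (fst z) (snd z)"
    proof -
      have "(\<lambda>k. g (fst (zs (\<nu> k)), snd (zs (\<nu> k))) + \<nu> k / 2 * (norm (fst (zs (\<nu> k))))\<^sup>2 - \<nu> k / 2 * (norm (snd (zs (\<nu> k))))\<^sup>2)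
          \<longlonglongrightarrow> g (fst z, snd z) + 0 / 2 * (norm (fst z))\<^sup>2 - 0 / 2 * (norm (snd z))\<^sup>2"
        using zlim by (intro tendsto_intros gl xl yl lim) auto
      then show ?thesis by (simp add: reg_def g_def)
    qed
    have L3: "(\<lambda>k. reg (\<nu> k) f x (snd (zs (\<nu> k)))) \<longlonglongrightarrow> f x (snd z)"
    proof -
      have "(\<lambda>k. g (x, snd (zs (\<nu> k))) + \<nu> k / 2 * (norm x)\<^sup>2 - \<nu> k / 2 * (norm (snd (zs (\<nu> k))))\<^sup>2)
          \<longlonglongrightarrow> g (x, snd z) + 0 / 2 * (norm x)\<^sup>2 - 0 / 2 * (norm (snd z))\<^sup>2"
        using zlim by (intro tendsto_intros gl yl lim) auto
      then show ?thesis by (simp add: reg_def g_def)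
    qed
    show "f (fst z) y \<le> f (fst z) (snd z)"
      by (rule LIMSEQ_le[OF L1 L2]) (use s(1) in auto)
    show "f (fst z) (snd z) \<le> f x (snd z)"
      by (rule LIMSEQ_le[OF L2 L3]) (use s(2) in auto)
  qed
  show "\<exists>z. (\<lambda>k. zs (\<nu> k)) \<longlonglongrightarrow> z \<and> saddle_point f z"
    using zlim saddle by blast
qed

end
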